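(* Let $(\mathcal{X},d)$ be a complete separable metric space, $n \ge 2$, and let $P_X$ put mass $1/n$ on each of $n$ distinct points $x_1, \ldots, x_n \in \mathcal{X}$. Then $D(x_1; P_X) \leq 1 + \left(1 - \frac{1}{n} \right)\left(1 - \frac{3}{n} \right)$, with equality if and only if $d(x_i, x_j) = d(x_i, x_1) + d(x_1, x_j)$ for all distinct $i, j \in \{ 2, \ldots, n \}$.
   Context: Define $h: \mathcal{X}^3 \to \mathbb{R}$ by $h(x_1, x_2, x_3) := \mathbb{I}( x_3 \notin \{x_1, x_2\} ) \dfrac{ d^2(x_1, x_3) + d^2(x_2, x_3) - d^2(x_1, x_2) }{d(x_1, x_3)\, d(x_2, x_3) }$, where $h := 0$ when $x_3 \in \{x_1,x_2\}$. The metric spatial depth of $\mu \in \mathcal{X}$ with respect to a probability distribution $P_X$ on $\mathcal{X}$ is $D(\mu; P_X) := 1 - \frac{1}{2} \mathrm{E} \{ h(X_1, X_2, \mu) \}$, where $X_1, X_2 \sim P_X$ are independent. *)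

theory Defs
  imports "HOL-Probability.Probability"
begin

definition msd_h :: "'a::metric_space \<Rightarrow> 'a \<Rightarrow> 'a \<Rightarrow> real" where
  "msd_h x1 x2 x3 =
     (if x3 \<notin> {x1, x2}
      then ((dist x1 x3)\<^sup>2 + (dist x2 x3)\<^sup>2 - (dist x1 x2)\<^sup>2) / (dist x1 x3 * dist x2 x3)
      else 0)"

definition metric_spatial_depth :: "'a::metric_space \<Rightarrow> 'a pmf \<Rightarrow> real" where
  "metric_spatial_depth mu P =
     1 - 1/2 * measure_pmf.expectation (pair_pmf P P) (\<lambda>(x1, x2). msd_h x1 x2 mu)"

end

theory Submission
  imports Defs
begin

definition low :: "nat \<Rightarrow> nat \<Rightarrow> real" where
  "low i j = (if i = 1 \<or> j = 1 then 0 else if i = j then 2 else -2)"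

lemma term_bound:
  fixes x :: "nat \<Rightarrow> 'a::metric_space"
  assumes inj: "inj_on x {1..n}" and i: "i \<in> {1..n}" and j: "j \<in> {1..n}" and n: "n \<ge> 1"
  shows "msd_h (x i) (x j) (x 1) \<ge> low i j \<and>
     (msd_h (x i) (x j) (x 1) = low i j \<longleftrightarrow>
       (i \<noteq> 1 \<and> j \<noteq> 1 \<and> i \<noteq> j \<longrightarrow> dist (x i) (x j) = dist (x i) (x 1) + dist (x 1) (x j)))"
proof -
  have one: "1 \<in> {1..n}" using n by auto
  have ne: "\<And>k. k \<in> {1..n} \<Longrightarrow> k \<noteq> 1 \<Longrightarrow> x k \<noteq> x 1"
    using inj one by (metis inj_on_eq_iff)
  show ?thesis
  proof (cases "i = 1 \<or> j = 1")
    case True thus ?thesis by (auto simp: msd_h_def low_def)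
  next
    case False
    hence xi: "x i \<noteq> x 1" and xj: "x j \<noteq> x 1" using ne i j by auto
    show ?thesis
    proof (cases "i = j")
      case True
      have "dist (x i) (x 1) > 0" using xi by simp
      thus ?thesis using True False xi
        by (simp add: msd_h_def low_def power2_eq_square)
    next
      case ij: False
      define p where "p = dist (x i) (x 1)"
      define q where "q = dist (x j) (x 1)"
      define r where "r = dist (x i) (x j)"
      have p: "p > 0" using xi p_def by simp
      have q: "q > 0" using xj q_def by simp
      have r: "r \<ge> 0" "r \<le> p + q" unfolding p_def q_def r_def
        by (simp, metis dist_commute dist_triangle)
      have h: "msd_h (x i) (x j) (x 1) = (p^2 + q^2 - r^2) / (p*q)"
        using xi xj by (simp add: msd_h_def p_def q_def r_def)
      have e: "(p^2 + q^2 - r^2) / (p*q) - (-2) = ((p+q)^2 - r^2)/(p*q)"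
        using p q by (simp add: field_simps power2_eq_square)
      have "(p+q)^2 - r^2 \<ge> 0" using r by (simp add: power_mono)
      hence ge: "((p+q)^2 - r^2)/(p*q) \<ge> 0" using p q by simp
      have "((p+q)^2 - r^2)/(p*q) = 0 \<longleftrightarrow> r = p + q"
      proof
        assume "((p+q)^2 - r^2)/(p*q) = 0"
        hence "(p+q)^2 = r^2" using p q by simp
        thus "r = p + q" using r p q by (metis power2_eq_iff_nonneg add_nonneg_nonneg less_imp_le)
      qed simp
      moreover have lw: "low i j = -2" using False ij by (simp add: low_def)
      moreover have "(i \<noteq> 1 \<and> j \<noteq> 1 \<and> i \<noteq> j \<longrightarrow> dist (x i) (x j) = dist (x i) (x 1) + dist (x 1) (x j))
          \<longleftrightarrow> r = p + q"
        using False ij unfolding r_def p_def q_def by (simp add: dist_commute)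
      moreover have "msd_h (x i) (x j) (x 1) - low i j = ((p+q)^2 - r^2)/(p*q)"
        using h e lw by simp
      ultimately show ?thesis using ge by (metis diff_ge_0_iff_ge eq_iff_diff_eq_0)
    qed
  qed
qed

lemma sum_low:
  assumes "n \<ge> 2"
  shows "(\<Sum>i\<in>{1..n}. \<Sum>j\<in>{1..n}. low i j) = 2 * (real n - 1) * (3 - real n)"
proof -
  have inner: "(\<Sum>j\<in>{1..n}. low i j) = 6 - 2 * real n" if i: "i \<in> {2..n}" for i
  proof -
    have "{1..n} = insert 1 {2..n}" using assms by auto
    hence "(\<Sum>j\<in>{1..n}. low i j) = (\<Sum>j\<in>{2..n}. low i j)"
      by (simp add: low_def)
    also have "\<dots> = (\<Sum>j\<in>{2..n}. (-2 + (if j = i then 4 else 0)))"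
      using i by (intro sum.cong) (auto simp: low_def)
    also have "\<dots> = (\<Sum>j\<in>{2..n}. (-2::real)) + (\<Sum>j\<in>{2..n}. (if j = i then 4 else 0))"
      by (rule sum.distrib)
    also have "\<dots> = -2 * real (n - 1) + 4"
      using i by (simp only: sum.delta finite_atLeastAtMost sum_constant) simp
    finally show ?thesis using assms by (simp add: of_nat_diff)
  qed
  have "{1..n} = insert 1 {2..n}" using assms by auto
  hence "(\<Sum>i\<in>{1..n}. \<Sum>j\<in>{1..n}. low i j) = (\<Sum>i\<in>{2..n}. \<Sum>j\<in>{1..n}. low i j)"
    by (simp add: low_def)
  also have "\<dots> = (\<Sum>i\<in>{2..n}. 6 - 2 * real n)" using inner by simp
  also have "\<dots> = real (n - 1) * (6 - 2 * real n)" by simp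
  finally show ?thesis using assms by (simp add: of_nat_diff algebra_simps)
qed

theorem lemma2:
  fixes x :: "nat \<Rightarrow> 'a::polish_space" and n :: nat
  assumes "n \<ge> 2"
    and "inj_on x {1..n}"
  shows "metric_spatial_depth (x 1) (pmf_of_set (x ` {1..n}))
           \<le> 1 + (1 - 1 / real n) * (1 - 3 / real n)
       \<and> (metric_spatial_depth (x 1) (pmf_of_set (x ` {1..n}))
           = 1 + (1 - 1 / real n) * (1 - 3 / real n)
         \<longleftrightarrow> (\<forall>i\<in>{2..n}. \<forall>j\<in>{2..n}. i \<noteq> j \<longrightarrow>
                dist (x i) (x j) = dist (x i) (x 1) + dist (x 1) (x j)))"
proof -
  define S where "S = x ` {1..n}"
  define P where "P = pmf_of_set S"
  define A where "A = {1..n::nat}"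
  have cS: "card S = n" unfolding S_def using assms(2) by (simp add: card_image)
  have fS: "finite S" "S \<noteq> {}" unfolding S_def using assms(1) by auto
  have setP: "set_pmf P = S" unfolding P_def using fS by simp
  have pP: "\<And>a. a \<in> S \<Longrightarrow> pmf P a = 1 / real n" unfolding P_def using fS cS by simp
  define g where "g = (\<lambda>(a, b). msd_h a b (x 1))"
  have E: "measure_pmf.expectation (pair_pmf P P) g = (\<Sum>p\<in>S \<times> S. g p * pmf (pair_pmf P P) p)"
    by (rule integral_measure_pmf_real) (use fS setP in auto)
  also have "\<dots> = (\<Sum>p\<in>S \<times> S. g p / (real n)^2)"
    by (intro sum.cong) (auto simp: pmf_pair pP power2_eq_square)
  also have "\<dots> = (\<Sum>a\<in>S. \<Sum>b\<in>S. g (a, b)) / (real n)^2"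
    by (simp add: sum_divide_distrib sum.cartesian_product)
  also have "(\<Sum>a\<in>S. \<Sum>b\<in>S. g (a, b)) = (\<Sum>i\<in>A. \<Sum>j\<in>A. msd_h (x i) (x j) (x 1))"
    unfolding S_def A_def using assms(2)
    by (simp add: sum.reindex g_def)
  finally have E2: "measure_pmf.expectation (pair_pmf P P) g =
     (\<Sum>i\<in>A. \<Sum>j\<in>A. msd_h (x i) (x j) (x 1)) / (real n)^2" .
  define F where "F = (\<lambda>i j. msd_h (x i) (x j) (x 1) - low i j)"
  have Fnn: "\<And>i j. i \<in> A \<Longrightarrow> j \<in> A \<Longrightarrow> F i j \<ge> 0"
    using term_bound[OF assms(2)] assms(1) unfolding F_def A_def by force
  have Fz: "\<And>i j. i \<in> A \<Longrightarrow> j \<in> A \<Longrightarrow> F i j = 0 \<longleftrightarrow>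
       (i \<noteq> 1 \<and> j \<noteq> 1 \<and> i \<noteq> j \<longrightarrow> dist (x i) (x j) = dist (x i) (x 1) + dist (x 1) (x j))"
    using term_bound[OF assms(2)] assms(1) unfolding F_def A_def by force
  define T where "T = (\<Sum>i\<in>A. \<Sum>j\<in>A. F i j)"
  have Tsum: "(\<Sum>i\<in>A. \<Sum>j\<in>A. msd_h (x i) (x j) (x 1)) = 2 * (real n - 1) * (3 - real n) + T"
    using sum_low[OF assms(1)] unfolding T_def F_def A_def by (simp add: sum_subtractf)
  have Tnn: "T \<ge> 0" unfolding T_def using Fnn by (intro sum_nonneg) auto
  have T0: "T = 0 \<longleftrightarrow> (\<forall>i\<in>A. \<forall>j\<in>A. F i j = 0)"
  proof -
    have "T = 0 \<longleftrightarrow> (\<forall>i\<in>A. (\<Sum>j\<in>A. F i j) = 0)"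
      unfolding T_def using Fnn by (intro sum_nonneg_eq_0_iff) (auto simp: A_def intro: sum_nonneg)
    also have "\<dots> \<longleftrightarrow> (\<forall>i\<in>A. \<forall>j\<in>A. F i j = 0)"
    proof (intro ball_cong refl)
      fix i assume i: "i \<in> A"
      show "(\<Sum>j\<in>A. F i j) = 0 \<longleftrightarrow> (\<forall>j\<in>A. F i j = 0)"
        using Fnn i by (intro sum_nonneg_eq_0_iff) (auto simp: A_def)
    qed
    finally show ?thesis .
  qed
  have cond: "(\<forall>i\<in>A. \<forall>j\<in>A. F i j = 0) \<longleftrightarrow> (\<forall>i\<in>{2..n}. \<forall>j\<in>{2..n}. i \<noteq> j \<longrightarrow>
                dist (x i) (x j) = dist (x i) (x 1) + dist (x 1) (x j))"
    using Fz by (auto simp: A_def)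
  have npos: "real n > 0" using assms(1) by simp
  have Ev: "measure_pmf.expectation (pair_pmf P P) g = (2 * (real n - 1) * (3 - real n) + T) / (real n)^2"
    using E2 Tsum by simp
  have D: "metric_spatial_depth (x 1) (pmf_of_set (x ` {1..n}))
      = 1 - 1/2 * ((2 * (real n - 1) * (3 - real n) + T) / (real n)^2)"
    using Ev unfolding metric_spatial_depth_def P_def S_def g_def by simp
  also have "\<dots> = 1 + (1 - 1 / real n) * (1 - 3 / real n) - T / (2 * (real n)^2)"
    using npos by (simp add: field_simps power2_eq_square)
  finally have D: "metric_spatial_depth (x 1) (pmf_of_set (x ` {1..n}))
      = 1 + (1 - 1 / real n) * (1 - 3 / real n) - T / (2 * (real n)^2)" .
  have "T / (2 * (real n)^2) \<ge> 0" using Tnn by simp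
  moreover have "T / (2 * (real n)^2) = 0 \<longleftrightarrow> T = 0" using npos by simp
  ultimately show ?thesis using D T0 cond by auto
qed

end
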